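(* Consider the balanced regret multi-representative selection problem \[\min_{\pmb x\in\mathcal X}\ \max_{\pmb\delta\in\Delta(\Gamma),\,\pmb y\in\mathcal X}\ \min_{\pmb\epsilon\in\Delta(\Gamma')}\ \sum_{i\in[n]}(\hat c_i+d_i\delta_i+d_i\epsilon_i)(x_i-y_i),\quad \mathcal X=\Big\{\pmb x\in\{0,1\}^n:\sum_{i\in T_\ell}x_i=p_\ell\ \forall\ell\in[L]\Big\}.\] Let $\ell\in[L]$ and let $i,j\in T_\ell$ be two items with $\hat c_i\le\hat c_j$ and $\hat c_i+d_i\le\hat c_j+d_j$. Then there is an optimal solution $\pmb x$ with $x_i\ge x_j$.
   Context: $[n]=\{1,\dots,n\}$; $T_1\cup\dots\cup T_L=[n]$ is a partition and $p_\ell\le|T_\ell|$ are integers; $\hat c_i\ge0$, $d_i\ge0$; $\Gamma,\Gamma'\ge0$ are integers and $\Delta(k)=\{\pmb\delta\in\{0,1\}^n:\sum_i\delta_i\le k\}$. *)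

theory Defs
  imports Complex_Main
begin

text \<open>Vectors in {0,1}^n are modelled as functions nat => real that take
  values in {0,1} on {1..n} and vanish outside {1..n}.\<close>

definition binvecs :: "nat \<Rightarrow> (nat \<Rightarrow> real) set" where
  "binvecs n = {x. (\<forall>i\<in>{1..n}. x i = 0 \<or> x i = 1) \<and> (\<forall>i. i \<notin> {1..n} \<longrightarrow> x i = 0)}"

definition Delta :: "nat \<Rightarrow> nat \<Rightarrow> (nat \<Rightarrow> real) set" where
  "Delta n k = {\<delta> \<in> binvecs n. (\<Sum>i\<in>{1..n}. \<delta> i) \<le> real k}"

definition feasX :: "nat \<Rightarrow> nat \<Rightarrow> (nat \<Rightarrow> nat set) \<Rightarrow> (nat \<Rightarrow> nat) \<Rightarrow> (nat \<Rightarrow> real) set" where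
  "feasX n L T p = {x \<in> binvecs n. \<forall>l\<in>{1..L}. (\<Sum>i\<in>T l. x i) = real (p l)}"

definition regret_obj ::
  "nat \<Rightarrow> nat \<Rightarrow> (nat \<Rightarrow> nat set) \<Rightarrow> (nat \<Rightarrow> nat) \<Rightarrow> (nat \<Rightarrow> real) \<Rightarrow> (nat \<Rightarrow> real)
    \<Rightarrow> nat \<Rightarrow> nat \<Rightarrow> (nat \<Rightarrow> real) \<Rightarrow> real" where
  "regret_obj n L T p c d \<Gamma> \<Gamma>' x =
     Max ((\<lambda>(\<delta>, y). Min ((\<lambda>\<epsilon>. \<Sum>i\<in>{1..n}. (c i + d i * \<delta> i + d i * \<epsilon> i) * (x i - y i))
                              ` Delta n \<Gamma>'))
          ` (Delta n \<Gamma> \<times> feasX n L T p))"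

end

theory Submission
  imports Defs
begin

lemma binvecs_finite: "finite (binvecs n)"
proof -
  have "binvecs n \<subseteq> (\<lambda>S k. if k \<in> S then (1::real) else 0) ` Pow {1..n}"
  proof
    fix x assume x: "x \<in> binvecs n"
    let ?S = "{k\<in>{1..n}. x k = 1}"
    have "x = (\<lambda>k. if k \<in> ?S then 1 else 0)"
      using x unfolding binvecs_def by (auto simp: fun_eq_iff)
    thus "x \<in> (\<lambda>S k. if k \<in> S then (1::real) else 0) ` Pow {1..n}" by blast
  qed
  thus ?thesis by (rule finite_subset) simp
qed

lemma sum_split2:
  assumes "finite A" "i \<in> A" "j \<in> A" "i \<noteq> j"
  shows "sum g A = g i + g j + sum g (A - {i,j})"
proof -
  have "sum g A = g i + sum g (A - {i})" by (rule sum.remove) (use assms in auto)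
  also have "sum g (A - {i}) = g j + sum g (A - {i} - {j})" by (rule sum.remove) (use assms in auto)
  also have "A - {i} - {j} = A - {i,j}" by auto
  finally show ?thesis by (simp add: add.assoc)
qed

lemma bin01: "x \<in> binvecs n \<Longrightarrow> k \<in> {1..n} \<Longrightarrow> x k = 0 \<or> x k = 1"
  unfolding binvecs_def by auto

lemma Delta_mod:
  assumes "\<delta> \<in> Delta n k" "i \<in> {1..n}" "j \<in> {1..n}" "i \<noteq> j"
  shows "\<delta>(i:=0, j:=\<delta> i) \<in> Delta n k"
proof -
  have b: "\<delta> \<in> binvecs n" and s: "(\<Sum>m\<in>{1..n}. \<delta> m) \<le> real k"
    using assms(1) unfolding Delta_def by auto
  have b2: "\<delta>(i:=0, j:=\<delta> i) \<in> binvecs n"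
    using b assms(2-4) unfolding binvecs_def by auto
  have "\<delta> j \<ge> 0" using bin01[OF b assms(3)] by auto
  have r: "(\<Sum>m\<in>{1..n}-{i,j}. (\<delta>(i:=0, j:=\<delta> i)) m) = (\<Sum>m\<in>{1..n}-{i,j}. \<delta> m)"
    by (rule sum.cong) auto
  have e1: "(\<Sum>m\<in>{1..n}. (\<delta>(i:=0, j:=\<delta> i)) m) = 0 + \<delta> i + (\<Sum>m\<in>{1..n}-{i,j}. \<delta> m)"
    using sum_split2[of "{1..n}" i j "\<delta>(i:=0, j:=\<delta> i)"] assms(2-4) r by simp
  have e2: "(\<Sum>m\<in>{1..n}. \<delta> m) = \<delta> i + \<delta> j + (\<Sum>m\<in>{1..n}-{i,j}. \<delta> m)"
    using sum_split2[of "{1..n}" i j "\<delta>"] assms(2-4) by simp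
  have "(\<Sum>m\<in>{1..n}. (\<delta>(i:=0, j:=\<delta> i)) m) \<le> real k" using e1 e2 s \<open>\<delta> j \<ge> 0\<close> by linarith
  thus ?thesis using b2 unfolding Delta_def by auto
qed

lemma feas_swap:
  assumes part_cover: "(\<Union>k\<in>{1..L}. T k) = {1..n}"
    and part_disj: "\<forall>k\<in>{1..L}. \<forall>k'\<in>{1..L}. k \<noteq> k' \<longrightarrow> T k \<inter> T k' = {}"
    and l_in: "l \<in> {1..L}" and i_in: "i \<in> T l" and j_in: "j \<in> T l" and ij: "i \<noteq> j"
    and x: "x \<in> feasX n L T p"
  shows "x(i:=x j, j:=x i) \<in> feasX n L T p"
proof -
  have Tsub: "\<And>k. k \<in> {1..L} \<Longrightarrow> T k \<subseteq> {1..n}" using part_cover by blast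
  have iI: "i \<in> {1..n}" and jI: "j \<in> {1..n}" using Tsub[OF l_in] i_in j_in by auto
  have xb: "x \<in> binvecs n" and xs: "\<forall>k\<in>{1..L}. (\<Sum>m\<in>T k. x m) = real (p k)"
    using x unfolding feasX_def by auto
  have b: "x(i:=x j, j:=x i) \<in> binvecs n" using xb iI jI unfolding binvecs_def by auto
  have "(\<Sum>m\<in>T k. (x(i:=x j, j:=x i)) m) = real (p k)" if k: "k \<in> {1..L}" for k
  proof (cases "k = l")
    case True
    have fin: "finite (T l)" using Tsub[OF l_in] finite_subset by blast
    have "(\<Sum>m\<in>T l. (x(i:=x j, j:=x i)) m) = x j + x i + (\<Sum>m\<in>T l - {i,j}. x m)"
      proof -
        have "(\<Sum>m\<in>T l - {i,j}. (x(i:=x j, j:=x i)) m) = (\<Sum>m\<in>T l - {i,j}. x m)"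
          by (rule sum.cong) auto
        thus ?thesis using sum_split2[OF fin i_in j_in ij, of "x(i:=x j, j:=x i)"] ij by simp
      qed
    also have "\<dots> = (\<Sum>m\<in>T l. x m)"
      using sum_split2[OF fin i_in j_in ij, of x] by simp
    finally show ?thesis using xs l_in True by simp
  next
    case False
    have "i \<notin> T k" "j \<notin> T k" using part_disj k l_in False i_in j_in by blast+
    hence "(\<Sum>m\<in>T k. (x(i:=x j, j:=x i)) m) = (\<Sum>m\<in>T k. x m)"
      by (intro sum.cong) auto
    thus ?thesis using xs k by simp
  qed
  thus ?thesis using b unfolding feasX_def by auto
qed

lemma Delta_zero: "(\<lambda>_. 0) \<in> Delta n k"
  unfolding Delta_def binvecs_def by auto

lemma Delta_finite: "finite (Delta n k)"
  unfolding Delta_def using binvecs_finite by auto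

lemma feasX_finite: "finite (feasX n L T p)"
  unfolding feasX_def using binvecs_finite by auto

theorem lemma7:
  fixes n L :: nat and T :: "nat \<Rightarrow> nat set" and p :: "nat \<Rightarrow> nat"
    and c d :: "nat \<Rightarrow> real" and \<Gamma> \<Gamma>' :: nat and l i j :: nat
  assumes part_cover: "(\<Union>k\<in>{1..L}. T k) = {1..n}"
    and part_disj: "\<forall>k\<in>{1..L}. \<forall>k'\<in>{1..L}. k \<noteq> k' \<longrightarrow> T k \<inter> T k' = {}"
    and part_ne: "\<forall>k\<in>{1..L}. T k \<noteq> {}"
    and p_le: "\<forall>k\<in>{1..L}. p k \<le> card (T k)"
    and c_nonneg: "\<forall>k\<in>{1..n}. c k \<ge> 0"
    and d_nonneg: "\<forall>k\<in>{1..n}. d k \<ge> 0"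
    and l_in: "l \<in> {1..L}" and i_in: "i \<in> T l" and j_in: "j \<in> T l"
    and cij: "c i \<le> c j" and cdij: "c i + d i \<le> c j + d j"
  shows "\<exists>x \<in> feasX n L T p.
           (\<forall>x' \<in> feasX n L T p. regret_obj n L T p c d \<Gamma> \<Gamma>' x \<le> regret_obj n L T p c d \<Gamma> \<Gamma>' x')
           \<and> x i \<ge> x j"
proof -
  let ?X = "feasX n L T p"
  let ?F = "regret_obj n L T p c d \<Gamma> \<Gamma>'"
  have Tsub: "\<And>k. k \<in> {1..L} \<Longrightarrow> T k \<subseteq> {1..n}" using part_cover by blast
  have Tfin: "\<And>k. k \<in> {1..L} \<Longrightarrow> finite (T k)" using Tsub finite_subset by blast
  have iI: "i \<in> {1..n}" and jI: "j \<in> {1..n}" using Tsub[OF l_in] i_in j_in by auto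
  have "\<forall>k\<in>{1..L}. \<exists>S. S \<subseteq> T k \<and> card S = p k"
  proof
    fix k assume k: "k \<in> {1..L}"
    obtain S where "S \<subseteq> T k" "card S = p k"
      using obtain_subset_with_card_n[OF p_le[rule_format, OF k]] by blast
    thus "\<exists>S. S \<subseteq> T k \<and> card S = p k" by blast
  qed
  hence "\<exists>S. \<forall>k\<in>{1..L}. S k \<subseteq> T k \<and> card (S k) = p k" by (rule bchoice)
  then obtain S where S: "\<forall>k\<in>{1..L}. S k \<subseteq> T k \<and> card (S k) = p k"
    by blast
  define U where "U = (\<Union>k\<in>{1..L}. S k)"
  define x1 where "x1 = (\<lambda>m. if m \<in> U then (1::real) else 0)"
  have U_sub: "U \<subseteq> {1..n}" using S part_cover unfolding U_def by blast
  have x1b: "x1 \<in> binvecs n" using U_sub unfolding x1_def binvecs_def by auto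
  have "(\<Sum>m\<in>T k. x1 m) = real (p k)" if k: "k \<in> {1..L}" for k
  proof -
    have mem: "(m \<in> U) = (m \<in> S k)" if m: "m \<in> T k" for m
    proof
      assume "m \<in> U"
      then obtain k' where k': "k' \<in> {1..L}" "m \<in> S k'" unfolding U_def by blast
      have "m \<in> T k'" using S k' by blast
      hence "k' = k" using part_disj k k' m by blast
      thus "m \<in> S k" using k' by simp
    next
      assume "m \<in> S k" thus "m \<in> U" using k unfolding U_def by blast
    qed
    have "(\<Sum>m\<in>T k. x1 m) = (\<Sum>m\<in>T k. if m \<in> S k then 1 else 0)"
      unfolding x1_def by (rule sum.cong) (simp_all add: mem)
    also have "\<dots> = (\<Sum>m\<in>T k \<inter> S k. 1)"
      by (rule sum.inter_restrict[symmetric]) (rule Tfin[OF k])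
    also have "T k \<inter> S k = S k" using S k by blast
    finally show ?thesis using S k by simp
  qed
  hence x1X: "x1 \<in> ?X" using x1b unfolding feasX_def by auto
  have Xne: "?X \<noteq> {}" using x1X by blast
  have finFX: "finite (?F ` ?X)" using feasX_finite by simp
  have "Min (?F ` ?X) \<in> ?F ` ?X" using Min_in[OF finFX] Xne by blast
  then obtain x0 where x0X: "x0 \<in> ?X" and x0m: "Min (?F ` ?X) = ?F x0" by blast
  have x0opt: "\<forall>x' \<in> ?X. ?F x0 \<le> ?F x'"
  proof
    fix x' assume "x' \<in> ?X"
    hence "Min (?F ` ?X) \<le> ?F x'" using finFX by simp
    thus "?F x0 \<le> ?F x'" using x0m by simp
  qed
  show ?thesis
  proof (cases "x0 j \<le> x0 i")
    case True
    thus ?thesis using x0X x0opt by blast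
  next
    case False
    have x0b: "x0 \<in> binvecs n" using x0X unfolding feasX_def by auto
    have xi: "x0 i = 0" and xj: "x0 j = 1"
      using False bin01[OF x0b iI] bin01[OF x0b jI] by auto
    have ij: "i \<noteq> j" using xi xj by auto
    define xs where "xs = x0(i:=x0 j, j:=x0 i)"
    have xsX: "xs \<in> ?X" unfolding xs_def
      by (rule feas_swap[OF part_cover part_disj l_in i_in j_in ij x0X])
    have xsi: "xs i = 1" and xsj: "xs j = 0" using xi xj ij unfolding xs_def by auto
    have finD: "finite (Delta n \<Gamma> \<times> ?X)" using Delta_finite feasX_finite by blast
    have neD: "Delta n \<Gamma> \<times> ?X \<noteq> {}" using Delta_zero Xne by blast
    have finD': "finite (Delta n \<Gamma>')" by (rule Delta_finite)
    have neD': "Delta n \<Gamma>' \<noteq> {}" using Delta_zero by blast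
    define f where "f = (\<lambda>x \<delta> y \<epsilon>. \<Sum>k\<in>{1..n}. (c k + d k * \<delta> k + d k * \<epsilon> k) * (x k - (y::nat\<Rightarrow>real) k))"
    define g where "g = (\<lambda>x. (\<lambda>(\<delta>, y). Min ((\<lambda>\<epsilon>. f x \<delta> y \<epsilon>) ` Delta n \<Gamma>')))"
    have Feq: "\<And>x. ?F x = Max (g x ` (Delta n \<Gamma> \<times> ?X))"
      unfolding regret_obj_def g_def f_def by simp
    have key: "g xs (\<delta>, y) \<le> ?F x0" if \<delta>D: "\<delta> \<in> Delta n \<Gamma>" and yX: "y \<in> ?X" for \<delta> y
    proof -
      define \<delta>' where "\<delta>' = \<delta>(i:=0, j:=\<delta> i)"
      define y' where "y' = y(i:=y j, j:=y i)"
      have \<delta>'D: "\<delta>' \<in> Delta n \<Gamma>" unfolding \<delta>'_def by (rule Delta_mod[OF \<delta>D iI jI ij])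
      have y'X: "y' \<in> ?X" unfolding y'_def
        by (rule feas_swap[OF part_cover part_disj l_in i_in j_in ij yX])
      have finE: "finite ((\<lambda>\<epsilon>. f x0 \<delta>' y' \<epsilon>) ` Delta n \<Gamma>')" using finD' by simp
      obtain \<epsilon>' where \<epsilon>'D: "\<epsilon>' \<in> Delta n \<Gamma>'"
        and \<epsilon>'m: "Min ((\<lambda>\<epsilon>. f x0 \<delta>' y' \<epsilon>) ` Delta n \<Gamma>') = f x0 \<delta>' y' \<epsilon>'"
        using Min_in[OF finE] neD' by auto
      define \<epsilon> where "\<epsilon> = \<epsilon>'(i:=0, j:=\<epsilon>' i)"
      have \<epsilon>D: "\<epsilon> \<in> Delta n \<Gamma>'" unfolding \<epsilon>_def by (rule Delta_mod[OF \<epsilon>'D iI jI ij])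
      have yb: "y \<in> binvecs n" using yX unfolding feasX_def by auto
      have \<delta>b: "\<delta> \<in> binvecs n" using \<delta>D unfolding Delta_def by auto
      have \<epsilon>'b: "\<epsilon>' \<in> binvecs n" using \<epsilon>'D unfolding Delta_def by auto
      have di: "d i \<ge> 0" and dj: "d j \<ge> 0" using d_nonneg iI jI by auto
      have ineq1: "(c i + d i * \<delta> i + d i * 0) * (1 - y i) \<le> (c j + d j * \<delta> i + d j * \<epsilon>' j) * (1 - y i)"
        using bin01[OF yb iI] bin01[OF \<delta>b iI] bin01[OF \<epsilon>'b jI] cij cdij di dj by auto
      have ineq2: "(c j + d j * \<delta> j + d j * \<epsilon>' i) * (0 - y j) \<le> (c i + d i * 0 + d i * \<epsilon>' i) * (0 - y j)"
        using bin01[OF yb jI] bin01[OF \<delta>b jI] bin01[OF \<epsilon>'b iI] cij cdij di dj by auto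
      have "f xs \<delta> y \<epsilon> = (c i + d i * \<delta> i + d i * 0) * (1 - y i) + (c j + d j * \<delta> j + d j * \<epsilon>' i) * (0 - y j)
          + (\<Sum>k\<in>{1..n}-{i,j}. (c k + d k * \<delta> k + d k * \<epsilon>' k) * (x0 k - y k))"
      proof -
        have "(\<Sum>k\<in>{1..n}-{i,j}. (c k + d k * \<delta> k + d k * \<epsilon> k) * (xs k - y k))
            = (\<Sum>k\<in>{1..n}-{i,j}. (c k + d k * \<delta> k + d k * \<epsilon>' k) * (x0 k - y k))"
          unfolding \<epsilon>_def xs_def by (intro sum.cong) auto
        thus ?thesis unfolding f_def
          using sum_split2[OF _ iI jI ij, of "\<lambda>k. (c k + d k * \<delta> k + d k * \<epsilon> k) * (xs k - y k)"]
            xsi xsj ij unfolding \<epsilon>_def by simp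
      qed
      also have "\<dots> \<le> (c i + d i * 0 + d i * \<epsilon>' i) * (0 - y j) + (c j + d j * \<delta> i + d j * \<epsilon>' j) * (1 - y i)
          + (\<Sum>k\<in>{1..n}-{i,j}. (c k + d k * \<delta> k + d k * \<epsilon>' k) * (x0 k - y k))"
        using ineq1 ineq2 by linarith
      also have "\<dots> = f x0 \<delta>' y' \<epsilon>'"
      proof -
        have "(\<Sum>k\<in>{1..n}-{i,j}. (c k + d k * \<delta>' k + d k * \<epsilon>' k) * (x0 k - y' k))
            = (\<Sum>k\<in>{1..n}-{i,j}. (c k + d k * \<delta> k + d k * \<epsilon>' k) * (x0 k - y k))"
          unfolding \<delta>'_def y'_def by (intro sum.cong) auto
        thus ?thesis unfolding f_def
          using sum_split2[OF _ iI jI ij, of "\<lambda>k. (c k + d k * \<delta>' k + d k * \<epsilon>' k) * (x0 k - y' k)"]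
            xi xj ij unfolding \<delta>'_def y'_def by simp
      qed
      finally have fle: "f xs \<delta> y \<epsilon> \<le> f x0 \<delta>' y' \<epsilon>'" .
      have "g xs (\<delta>, y) \<le> f xs \<delta> y \<epsilon>"
        unfolding g_def using finD' \<epsilon>D by simp
      also have "\<dots> \<le> g x0 (\<delta>', y')" using fle \<epsilon>'m unfolding g_def by simp
      also have "\<dots> \<le> ?F x0" unfolding Feq
        using finD \<delta>'D y'X by (intro Max_ge) auto
      finally show ?thesis .
    qed
    have "?F xs \<le> ?F x0" unfolding Feq[of xs]
      using finD neD key by (subst Max_le_iff) auto
    hence "\<forall>x' \<in> ?X. ?F xs \<le> ?F x'" using x0opt by force
    moreover have "xs j \<le> xs i" using xsi xsj by simp
    ultimately show ?thesis using xsX by blast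
  qed
qed

end
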